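(* Let $G=(L\cup R,E)$ be a $(c,d)$-regular bipartite graph with $L=[n]$, $C_0\subseteq\mathbb{F}_2^d$ a linear code of minimum distance $d_0$, $t=d_0/2$, $x\in\mathbb{F}_2^n$, $y\in T(G,C_0)$ and $F=\{i\in[n]:x_i\ne y_i\}$. Then the number of $i\in[n]\setminus F$ such that $p_i>0$ at the end of $\mathsf{RandFlip}(x)$ is at most $\frac ct|F|$. In particular, for $x'=\mathsf{RandFlip}(x)$, one always has $d_H(x',y)\le\left(1+\frac ct\right)d_H(x,y)$.
   Context: A bipartite graph is $(c,d)$-regular if left degrees are $c$ and right degrees $d$. Tanner code: $L=[n]$, for each $v\in R$ a fixed ordering of $N(v)$ defines $x_{N(v)}\in\mathbb{F}_2^d$, and $T(G,C_0)=\{x:x_{N(v)}\in C_0\ \forall v\in R\}$. $d_H$ is Hamming distance. $\mathsf{Decode}(z)$ for $z\in\mathbb{F}_2^d$ is the codeword of $C_0$ closest to $z$, ties broken lexicographically. $\mathsf{RandFlip}(x)$: set $t=d_0/2$ and $p_1=\dots=p_n=0$; for each $v\in R$, let $w_v=\mathsf{Decode}(x_{N(v)})$; if $1\le d_H(w_v,x_{N(v)})<t$, let $i$ be the smallest element of $N(v)$ at which $w_v$ and $x_{N(v)}$ differ and increase $p_i$ by $\frac{t-d_H(w_v,x_{N(v)})}{ct}$. Then flip each $x_i$ independently with probability $p_i$ and return the result. *)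

theory Defs
  imports "HOL-Probability.Probability"
begin

text \<open>Vectors in F_2^n are modelled as functions nat => bool, only indices < n matter.
  Local words in F_2^d (and the code C0) are bool lists of length d.
  The bipartite graph: left vertices L = {0..<n}, right vertices a finite set R,
  and N v is the fixed ordering of the neighbourhood of v (a distinct list).\<close>

definition hdist :: "nat \<Rightarrow> (nat \<Rightarrow> bool) \<Rightarrow> (nat \<Rightarrow> bool) \<Rightarrow> nat" where
  "hdist n x y = card {i \<in> {..<n}. x i \<noteq> y i}"

definition hdist_list :: "bool list \<Rightarrow> bool list \<Rightarrow> nat" where
  "hdist_list u w = card {j. j < length u \<and> u ! j \<noteq> w ! j}"

definition cd_regular ::
  "nat \<Rightarrow> 'r set \<Rightarrow> ('r \<Rightarrow> nat list) \<Rightarrow> nat \<Rightarrow> nat \<Rightarrow> bool" where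
  "cd_regular n R N c d \<longleftrightarrow> finite R \<and>
     (\<forall>v\<in>R. length (N v) = d \<and> distinct (N v) \<and> set (N v) \<subseteq> {..<n}) \<and>
     (\<forall>i<n. card {v \<in> R. i \<in> set (N v)} = c)"

definition linear_code :: "nat \<Rightarrow> bool list set \<Rightarrow> bool" where
  "linear_code d C0 \<longleftrightarrow> C0 \<subseteq> {w. length w = d} \<and> replicate d False \<in> C0 \<and>
     (\<forall>u\<in>C0. \<forall>w\<in>C0. map2 (\<noteq>) u w \<in> C0)"

definition min_distance :: "bool list set \<Rightarrow> nat \<Rightarrow> bool" where
  "min_distance C0 d0 \<longleftrightarrow>
     (\<exists>u\<in>C0. \<exists>w\<in>C0. u \<noteq> w \<and> hdist_list u w = d0) \<and>
     (\<forall>u\<in>C0. \<forall>w\<in>C0. u \<noteq> w \<longrightarrow> d0 \<le> hdist_list u w)"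

definition tanner :: "'r set \<Rightarrow> ('r \<Rightarrow> nat list) \<Rightarrow> bool list set \<Rightarrow> (nat \<Rightarrow> bool) set" where
  "tanner R N C0 = {x. \<forall>v\<in>R. map x (N v) \<in> C0}"

definition decode :: "bool list set \<Rightarrow> bool list \<Rightarrow> bool list" where
  "decode C0 z = (THE w. w \<in> C0 \<and> (\<forall>u\<in>C0. hdist_list w z < hdist_list u z \<or>
      (hdist_list w z = hdist_list u z \<and> lexordp_eq w u)))"

definition first_diff :: "nat list \<Rightarrow> bool list \<Rightarrow> bool list \<Rightarrow> nat" where
  "first_diff Nv w z = Min {Nv ! j | j. j < length Nv \<and> w ! j \<noteq> z ! j}"

text \<open>The value p_i at the end of RandFlip(x), with t = d0/2.\<close>
definition rf_prob ::
  "'r set \<Rightarrow> ('r \<Rightarrow> nat list) \<Rightarrow> bool list set \<Rightarrow> nat \<Rightarrow> nat \<Rightarrow> (nat \<Rightarrow> bool) \<Rightarrow> nat \<Rightarrow> real" where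
  "rf_prob R N C0 d0 c x i =
     (let t = real d0 / 2 in
      \<Sum>v \<in> {v \<in> R. let z = map x (N v); w = decode C0 z; e = hdist_list w z in
               1 \<le> e \<and> real e < t \<and> first_diff (N v) w z = i}.
         (t - real (hdist_list (decode C0 (map x (N v))) (map x (N v)))) / (real c * t))"

definition randflip ::
  "nat \<Rightarrow> 'r set \<Rightarrow> ('r \<Rightarrow> nat list) \<Rightarrow> bool list set \<Rightarrow> nat \<Rightarrow> nat \<Rightarrow> (nat \<Rightarrow> bool) \<Rightarrow> (nat \<Rightarrow> bool) pmf" where
  "randflip n R N C0 d0 c x =
     map_pmf (\<lambda>f i. x i \<noteq> f i)
       (Pi_pmf {..<n} False (\<lambda>i. bernoulli_pmf (rf_prob R N C0 d0 c x i)))"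

end

theory Submission imports Defs begin
interpretation pmf_as_function .


lemma decode_in:
  assumes fin: "finite C0" and ne: "C0 \<noteq> {}"
  shows "decode C0 z \<in> C0"
proof -
  let ?h = "\<lambda>w. hdist_list w z"
  define m where "m = Min (?h ` C0)"
  define S where "S = {w\<in>C0. ?h w = m}"
  have "m \<in> ?h ` C0" unfolding m_def using fin ne by simp
  then have Sne: "S \<noteq> {}" unfolding S_def by auto
  have Sfin: "finite S" unfolding S_def using fin by simp
  have "\<exists>b\<in>S. \<forall>u\<in>S. lexordp_eq b u" using Sfin Sne
  proof (induction S rule: finite_ne_induct)
    case (singleton x) then show ?case by (simp add: lexordp_eq_refl)
  next
    case (insert a S')
    then obtain b where b: "b \<in> S'" "\<forall>u\<in>S'. lexordp_eq b u" by auto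
    show ?case
    proof (cases "lexordp_eq a b")
      case True then show ?thesis using b by (auto intro: lexordp_eq_trans lexordp_eq_refl)
    next
      case False then have "lexordp_eq b a" using lexordp_eq_linear by blast
      then show ?thesis using b by auto
    qed
  qed
  then obtain b where b: "b \<in> S" "\<forall>u\<in>S. lexordp_eq b u" by auto
  let ?P = "\<lambda>w. w \<in> C0 \<and> (\<forall>u\<in>C0. ?h w < ?h u \<or> (?h w = ?h u \<and> lexordp_eq w u))"
  have mle: "\<And>u. u \<in> C0 \<Longrightarrow> m \<le> ?h u" unfolding m_def using fin by simp
  have Pb: "?P b"
  proof -
    have "b \<in> C0" "?h b = m" using b(1) unfolding S_def by auto
    moreover have "\<forall>u\<in>C0. ?h b < ?h u \<or> (?h b = ?h u \<and> lexordp_eq b u)"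
    proof
      fix u assume u: "u \<in> C0"
      show "?h b < ?h u \<or> (?h b = ?h u \<and> lexordp_eq b u)"
      proof (cases "?h u = m")
        case True then have "u \<in> S" unfolding S_def using u by auto
        then show ?thesis using b True \<open>?h b = m\<close> by auto
      next
        case False then show ?thesis using mle[OF u] \<open>?h b = m\<close> by auto
      qed
    qed
    ultimately show ?thesis by blast
  qed
  have uniq: "\<And>w. ?P w \<Longrightarrow> w = b"
  proof -
    fix w assume Pw: "?P w"
    then have 1: "?h w = ?h b \<and> lexordp_eq w b" using Pb by fastforce
    have 2: "lexordp_eq b w" using Pb Pw by fastforce
    show "w = b" using 1 2 lexordp_eq_antisym by blast
  qed
  have "?P (decode C0 z)" unfolding decode_def
    by (rule theI[of ?P b, OF Pb uniq])
  then show ?thesis by simp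
qed

lemma bern_le0: "p \<le> 0 \<Longrightarrow> set_pmf (bernoulli_pmf p) \<subseteq> {False}"
proof -
  assume "p \<le> 0"
  then have "pmf (bernoulli_pmf p) True = 0" by transfer auto
  then show ?thesis by (auto simp: set_pmf_eq)
qed

lemma hdist_tri:
  assumes "length a = length b" "length b = length c"
  shows "hdist_list a c \<le> hdist_list a b + hdist_list b c"
proof -
  have "{j. j < length a \<and> a ! j \<noteq> c ! j} \<subseteq> {j. j < length a \<and> a ! j \<noteq> b ! j} \<union> {j. j < length b \<and> b ! j \<noteq> c ! j}"
    using assms by auto
  then have "card {j. j < length a \<and> a ! j \<noteq> c ! j} \<le> card ({j. j < length a \<and> a ! j \<noteq> b ! j} \<union> {j. j < length b \<and> b ! j \<noteq> c ! j})"
    by (intro card_mono) auto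
  also have "\<dots> \<le> card {j. j < length a \<and> a ! j \<noteq> b ! j} + card {j. j < length b \<and> b ! j \<noteq> c ! j}"
    by (rule card_Un_le)
  finally show ?thesis unfolding hdist_list_def .
qed

lemma hdist_map:
  assumes "distinct Nv"
  shows "hdist_list (map x Nv) (map y Nv) = card {i \<in> set Nv. x i \<noteq> y i}"
proof -
  have "{i \<in> set Nv. x i \<noteq> y i} = (\<lambda>j. Nv ! j) ` {j. j < length Nv \<and> x (Nv ! j) \<noteq> y (Nv ! j)}"
    by (auto simp: in_set_conv_nth)
  moreover have "inj_on (\<lambda>j. Nv ! j) {j. j < length Nv \<and> x (Nv ! j) \<noteq> y (Nv ! j)}"
    using assms by (auto simp: inj_on_def nth_eq_iff_index_eq)
  moreover have "{j. j < length (map x Nv) \<and> map x Nv ! j \<noteq> map y Nv ! j} = {j. j < length Nv \<and> x (Nv ! j) \<noteq> y (Nv ! j)}"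
    by auto
  ultimately show ?thesis unfolding hdist_list_def by (simp add: card_image)
qed


theorem lemma3p4:
  fixes n c d d0 :: nat and R :: "'r set" and N :: "'r \<Rightarrow> nat list"
    and C0 :: "bool list set" and x y :: "nat \<Rightarrow> bool"
  assumes "cd_regular n R N c d"
    and "linear_code d C0"
    and "min_distance C0 d0"
    and "y \<in> tanner R N C0"
  shows "real (card {i \<in> {..<n} - {i \<in> {..<n}. x i \<noteq> y i}. rf_prob R N C0 d0 c x i > 0})
           \<le> real c / (real d0 / 2) * real (card {i \<in> {..<n}. x i \<noteq> y i})
       \<and> (\<forall>x' \<in> set_pmf (randflip n R N C0 d0 c x).
           real (hdist n x' y) \<le> (1 + real c / (real d0 / 2)) * real (hdist n x y))"
proof -
  define F where "F = {i \<in> {..<n}. x i \<noteq> y i}"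
  define t where "t = real d0 / 2"
  define I where "I = {i \<in> {..<n} - F. rf_prob R N C0 d0 c x i > 0}"
  note cdr = assms(1)[unfolded cd_regular_def]
  have finR: "finite R" using cdr by (rule conjunct1)
  have Nv: "\<And>v. v \<in> R \<Longrightarrow> length (N v) = d \<and> distinct (N v) \<and> set (N v) \<subseteq> {..<n}"
    using cdr[THEN conjunct2, THEN conjunct1] by (rule bspec)
  have deg: "\<And>i. i < n \<Longrightarrow> card {v \<in> R. i \<in> set (N v)} = c"
  proof -
    have "\<forall>i<n. card {v \<in> R. i \<in> set (N v)} = c" using cdr[THEN conjunct2, THEN conjunct2] .
    then show "\<And>i. i < n \<Longrightarrow> card {v \<in> R. i \<in> set (N v)} = c" by blast
  qed
  note lc = assms(2)[unfolded linear_code_def]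
  have C0len: "C0 \<subseteq> {w. length w = d}" using lc by (rule conjunct1)
  have C0z: "replicate d False \<in> C0" using lc[THEN conjunct2] by (rule conjunct1)
  have finC0: "finite C0"
  proof -
    have "finite {w :: bool list. set w \<subseteq> UNIV \<and> length w = d}"
      by (rule finite_lists_length_eq) simp
    moreover have "C0 \<subseteq> {w :: bool list. set w \<subseteq> UNIV \<and> length w = d}" using C0len by auto
    ultimately show ?thesis by (rule finite_subset[rotated])
  qed
  have neC0: "C0 \<noteq> {}" using C0z by auto
  have mind: "\<And>u w. u \<in> C0 \<Longrightarrow> w \<in> C0 \<Longrightarrow> u \<noteq> w \<Longrightarrow> d0 \<le> hdist_list u w"
    using assms(3)[unfolded min_distance_def, THEN conjunct2] by blast
  have d0pos: "d0 > 0"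
  proof (rule ccontr)
    assume "\<not> d0 > 0"
    then have "d0 = 0" by simp
    obtain u w where uw: "u \<in> C0" "w \<in> C0" "u \<noteq> w" "hdist_list u w = d0"
      using assms(3)[unfolded min_distance_def, THEN conjunct1] by blast
    have "finite {j. j < length u \<and> u ! j \<noteq> w ! j}" by simp
    then have "{j. j < length u \<and> u ! j \<noteq> w ! j} = {}"
      using uw(4) \<open>d0 = 0\<close> unfolding hdist_list_def by simp
    moreover have "length u = length w" using uw C0len by auto
    ultimately have "u = w" by (auto intro: nth_equalityI)
    then show False using uw by simp
  qed
  have tpos: "t > 0" unfolding t_def using d0pos by simp
  have ytan: "\<And>v. v \<in> R \<Longrightarrow> map y (N v) \<in> C0" using assms(4) unfolding tanner_def by blast

  define cond where "cond v i \<longleftrightarrow> 1 \<le> hdist_list (decode C0 (map x (N v))) (map x (N v))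
      \<and> real (hdist_list (decode C0 (map x (N v))) (map x (N v))) < t
      \<and> first_diff (N v) (decode C0 (map x (N v))) (map x (N v)) = i" for v i

  have key: "t < real (card (set (N v) \<inter> F))" if v: "v \<in> R" and cv: "cond v i" and iF: "i \<notin> F" for v i
  proof -
    define z where "z = map x (N v)"
    define w where "w = decode C0 z"
    define e where "e = hdist_list w z"
    have wC: "w \<in> C0" unfolding w_def using decode_in[OF finC0 neC0] .
    have lw: "length w = d" using wC C0len by auto
    have lN: "length (N v) = d" "distinct (N v)" "set (N v) \<subseteq> {..<n}" using Nv[OF v] by auto
    have e1: "1 \<le> e" "real e < t" and fd: "first_diff (N v) w z = i"
      using cv unfolding cond_def e_def w_def z_def by auto
    have "{j. j < length w \<and> w ! j \<noteq> z ! j} \<noteq> {}"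
    proof
      assume "{j. j < length w \<and> w ! j \<noteq> z ! j} = {}"
      then have "e = 0" unfolding e_def hdist_list_def by simp
      then show False using e1 by simp
    qed
    then obtain j0 where j0: "j0 < length w" "w ! j0 \<noteq> z ! j0" by auto
    define D where "D = {N v ! j | j. j < length (N v) \<and> w ! j \<noteq> z ! j}"
    have "N v ! j0 \<in> D" unfolding D_def using j0 lw lN by auto
    moreover have "finite D" unfolding D_def by simp
    ultimately have "Min D \<in> D" by (intro Min_in) auto
    moreover have "Min D = i" using fd unfolding first_diff_def D_def by simp
    ultimately obtain j where j: "j < length (N v)" "w ! j \<noteq> z ! j" "i = N v ! j"
      unfolding D_def by auto
    have "i \<in> set (N v)" using j nth_mem by simp
    then have ilt: "i < n" using lN by auto
    have zj: "z ! j = x i" unfolding z_def using j by simp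
    show ?thesis
    proof (cases "w = map y (N v)")
      case True
      then have "y i \<noteq> x i" using j zj by simp
      then have "i \<in> F" unfolding F_def using ilt by auto
      then show ?thesis using iF by simp
    next
      case False
      have "d0 \<le> hdist_list w (map y (N v))" using mind[OF wC ytan[OF v]] False by simp
      also have "\<dots> \<le> hdist_list w z + hdist_list z (map y (N v))"
        by (rule hdist_tri) (simp_all add: lw lN z_def)
      also have "hdist_list z (map y (N v)) = card {i \<in> set (N v). x i \<noteq> y i}"
        unfolding z_def by (rule hdist_map) (use lN in simp)
      also have "{i \<in> set (N v). x i \<noteq> y i} = set (N v) \<inter> F"
        unfolding F_def using lN by auto
      finally have "real d0 \<le> real e + real (card (set (N v) \<inter> F))" unfolding e_def by simp
      then show ?thesis using e1 unfolding t_def by simp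
    qed
  qed

  define V where "V = {v \<in> R. t < real (card (set (N v) \<inter> F))}"
  have finV: "finite V" unfolding V_def using finR by simp
  have exv: "\<exists>v \<in> R. cond v i" if "i \<in> I" for i
  proof (rule ccontr)
    assume "\<not> (\<exists>v \<in> R. cond v i)"
    then have E: "{v \<in> R. 1 \<le> hdist_list (decode C0 (map x (N v))) (map x (N v))
      \<and> real (hdist_list (decode C0 (map x (N v))) (map x (N v))) < real d0 / 2
      \<and> first_diff (N v) (decode C0 (map x (N v))) (map x (N v)) = i} = {}"
      unfolding cond_def t_def by blast
    have "rf_prob R N C0 d0 c x i = 0"
      unfolding rf_prob_def Let_def by (simp only: E sum.empty)
    then show False using that unfolding I_def by simp
  qed
  define g where "g i = (SOME v. v \<in> R \<and> cond v i)" for i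
  have g: "g i \<in> R \<and> cond (g i) i" if "i \<in> I" for i
    unfolding g_def by (rule someI_ex) (use exv[OF that] in blast)
  have injg: "inj_on g I"
  proof (rule inj_onI)
    fix i j assume ij: "i \<in> I" "j \<in> I" "g i = g j"
    have "cond (g i) i" using g[OF ij(1)] by simp
    moreover have "cond (g i) j" using g[OF ij(2)] ij(3) by simp
    ultimately show "i = j" unfolding cond_def by simp
  qed
  have gV: "g ` I \<subseteq> V"
  proof
    fix v assume "v \<in> g ` I"
    then obtain i where i: "i \<in> I" "v = g i" by auto
    have "i \<notin> F" using i unfolding I_def by auto
    then show "v \<in> V" unfolding V_def using key g i by auto
  qed
  have cardIV: "card I \<le> card V"
    using card_inj_on_le[OF injg gV finV] .

  have finF: "finite F" unfolding F_def by simp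
  have sumR: "(\<Sum>v\<in>R. card (set (N v) \<inter> F)) = c * card F"
  proof -
    have "(\<Sum>v\<in>R. card (set (N v) \<inter> F)) = (\<Sum>v\<in>R. \<Sum>i\<in>F. if i \<in> set (N v) then 1 else 0)"
    proof (rule sum.cong)
      fix v assume "v \<in> R"
      have "card (set (N v) \<inter> F) = card {i \<in> F. i \<in> set (N v)}"
        by (rule arg_cong[where f=card]) blast
      also have "\<dots> = (\<Sum>i\<in>{i \<in> F. i \<in> set (N v)}. 1)" by simp
      also have "\<dots> = (\<Sum>i\<in>F. if i \<in> set (N v) then 1 else 0)"
        by (rule sum.inter_filter[OF finF])
      finally show "card (set (N v) \<inter> F) = (\<Sum>i\<in>F. if i \<in> set (N v) then 1 else 0)" .
    qed simp
    also have "\<dots> = (\<Sum>i\<in>F. \<Sum>v\<in>R. if i \<in> set (N v) then 1 else 0)"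
      by (rule sum.swap)
    also have "\<dots> = (\<Sum>i\<in>F. c)"
    proof (rule sum.cong)
      fix i assume "i \<in> F"
      then have "i < n" unfolding F_def by simp
      have "(\<Sum>v\<in>R. if i \<in> set (N v) then 1 else 0) = (\<Sum>v\<in>{v \<in> R. i \<in> set (N v)}. 1::nat)"
        by (rule sum.inter_filter[OF finR, symmetric])
      also have "\<dots> = c" using deg[OF \<open>i < n\<close>] by simp
      finally show "(\<Sum>v\<in>R. if i \<in> set (N v) then 1 else 0) = c" .
    qed simp
    finally show ?thesis by simp
  qed
  have "real (card V) * t = (\<Sum>v\<in>V. t)" by simp
  also have "\<dots> \<le> (\<Sum>v\<in>V. real (card (set (N v) \<inter> F)))"
    by (rule sum_mono) (auto simp: V_def)
  also have "\<dots> \<le> (\<Sum>v\<in>R. real (card (set (N v) \<inter> F)))"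
    by (rule sum_mono2[OF finR]) (auto simp: V_def)
  also have "\<dots> = real (c * card F)" unfolding sumR[symmetric] by (simp only: of_nat_sum)
  finally have "real (card V) * t \<le> real c * real (card F)" by simp
  then have cV: "real (card V) \<le> real c / t * real (card F)"
    using tpos by (simp add: field_simps)
  have part1: "real (card I) \<le> real c / t * real (card F)"
    using cardIV cV by linarith

  have part2: "real (hdist n x' y) \<le> (1 + real c / t) * real (hdist n x y)"
    if x': "x' \<in> set_pmf (randflip n R N C0 d0 c x)" for x'
  proof -
    obtain f where f: "f \<in> set_pmf (Pi_pmf {..<n} False (\<lambda>i. bernoulli_pmf (rf_prob R N C0 d0 c x i)))"
      and x'f: "x' = (\<lambda>i. x i \<noteq> f i)"
      using x' unfolding randflip_def by auto
    have fi: "f i \<in> set_pmf (bernoulli_pmf (rf_prob R N C0 d0 c x i))" if "i < n" for i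
      using f that by (auto simp: set_Pi_pmf PiE_dflt_def)
    have sub: "{i \<in> {..<n}. x' i \<noteq> y i} \<subseteq> F \<union> I"
    proof
      fix i assume i: "i \<in> {i \<in> {..<n}. x' i \<noteq> y i}"
      show "i \<in> F \<union> I"
      proof (cases "i \<in> F")
        case False
        with i have "f i" unfolding F_def x'f by auto
        have "rf_prob R N C0 d0 c x i > 0"
        proof (rule ccontr)
          assume "\<not> rf_prob R N C0 d0 c x i > 0"
          then have "set_pmf (bernoulli_pmf (rf_prob R N C0 d0 c x i)) \<subseteq> {False}"
            by (intro bern_le0) simp
          then show False using fi \<open>f i\<close> i by auto
        qed
        then show ?thesis using i False unfolding I_def by auto
      qed simp
    qed
    have finI: "finite I" unfolding I_def by simp
    have "hdist n x' y \<le> card (F \<union> I)"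
      unfolding hdist_def by (rule card_mono) (use finF finI sub in auto)
    also have "\<dots> \<le> card F + card I" by (rule card_Un_le)
    finally have "real (hdist n x' y) \<le> real (card F) + real (card I)" by linarith
    also have "\<dots> \<le> (1 + real c / t) * real (card F)" using part1 by (simp add: algebra_simps)
    finally show ?thesis unfolding hdist_def F_def .
  qed
  show ?thesis using part1 part2 unfolding I_def F_def t_def by blast
qed

end
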